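(* Let $d\ge 2$ and let $a_1,a_2,b_1,b_2$ be integers with $0<a_1<b_1\le d$, $0<a_2<b_2\leq d$, $a_1\leq a_2$, $b_1\leq b_2$, and $(a_1,b_1)\neq(a_2,b_2)$. Then $\ell_d^{(a_1,b_1)}(n)\geq \ell_d^{(a_2,b_2)}(n)$ for all $n\geq 1$, and $$\lim_{n\to\infty}\left(\ell_d^{(a_1,b_1)}(n)-\ell_d^{(a_2,b_2)}(n)\right)=+\infty.$$
   Context: A partition is a finite nonincreasing sequence of positive integers (its parts); its size is not fixed. The perimeter of a partition with largest part $\alpha$ and $\lambda$ parts is $\alpha+\lambda-1$. For $0<a<b\le d$, $\ell_d^{(a,b)}(n)$ is the number of partitions of perimeter $n$ all of whose parts are congruent to $a$ or $b$ modulo $d$. *)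

theory Defs
  imports Main
begin

definition is_partition :: "nat list \<Rightarrow> bool" where
  "is_partition xs \<longleftrightarrow> sorted_wrt (\<ge>) xs \<and> (\<forall>x\<in>set xs. 0 < x)"

text \<open>Perimeter: largest part plus number of parts minus one (the empty
partition gets perimeter -1, so it is never counted for n \<ge> 1).\<close>
definition perimeter :: "nat list \<Rightarrow> int" where
  "perimeter xs = int (if xs = [] then 0 else Max (set xs)) + int (length xs) - 1"

definition ell :: "nat \<Rightarrow> nat \<Rightarrow> nat \<Rightarrow> nat \<Rightarrow> nat" where
  "ell d a b n = card {xs. is_partition xs \<and> perimeter xs = int n \<and>
      (\<forall>x\<in>set xs. x mod d = a mod d \<or> x mod d = b mod d)}"

end

theory Submission imports Defs begin

locale pset =
  fixes d a1 b1 a2 b2 :: nat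
  assumes d2: "d \<ge> 2" and h: "0<a1" "a1<b1" "b1\<le>d" "0<a2" "a2<b2" "b2\<le>d" "a1\<le>a2" "b1\<le>b2"
begin

definition S1 :: "nat \<Rightarrow> bool" where "S1 x \<longleftrightarrow> x mod d = a1 mod d \<or> x mod d = b1 mod d"
definition S2 :: "nat \<Rightarrow> bool" where "S2 x \<longleftrightarrow> x mod d = a2 mod d \<or> x mod d = b2 mod d"
definition phi :: "nat \<Rightarrow> nat" where
  "phi x = (if x mod d = a2 mod d then x - (a2 - a1) else x - (b2 - b1))"

lemma form_aux: assumes "x mod d = c mod d" "c \<le> d" "0 < x" "0 < c" shows "\<exists>q. x = c + d*q"
proof -
  have "c \<le> x"
  proof (cases "c = d")
    case True
    then have "x mod d = 0" using assms by simp
    then show ?thesis using True assms(3) by (cases "x<d") auto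
  next
    case False
    then have "c mod d = c" using assms by simp
    then show ?thesis using assms(1) by (metis mod_less_eq_dividend)
  qed
  then have "d dvd x - c" using assms(1) mod_eq_dvd_iff_nat by blast
  then obtain q where "x - c = d*q" by blast
  then show ?thesis using \<open>c \<le> x\<close> by (intro exI[of _ q]) simp
qed

lemma a2mod: "a2 mod d = a2" and a1mod: "a1 mod d = a1" using h by auto

lemma modne2: "b2 mod d \<noteq> a2 mod d"
proof (cases "b2 = d")
  case True then show ?thesis using h a2mod by simp
next
  case False then show ?thesis using h by simp
qed

lemma modne1: "b1 mod d \<noteq> a1 mod d"
proof (cases "b1 = d")
  case True then show ?thesis using h a1mod by simp
next
  case False then show ?thesis using h by simp
qed

lemma S2_form: assumes "S2 x" "0 < x"
  shows "(\<exists>q. x = a2 + d*q) \<or> (\<exists>q. x = b2 + d*q)"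
  using assms form_aux[of x a2] form_aux[of x b2] h unfolding S2_def by auto

lemma phi_a: "phi (a2 + d*q) = a1 + d*q"
proof -
  have "(a2 + d*q) mod d = a2 mod d" by simp
  then have "phi (a2 + d*q) = a2 + d*q - (a2 - a1)" unfolding phi_def by (simp only: simp_thms if_True)
  then show ?thesis using h by simp
qed

lemma phi_b: "phi (b2 + d*q) = b1 + d*q"
proof -
  have "(b2 + d*q) mod d = b2 mod d" by simp
  then have "(b2 + d*q) mod d \<noteq> a2 mod d" using modne2 by simp
  then have "phi (b2 + d*q) = b2 + d*q - (b2 - b1)" unfolding phi_def by (simp only: if_False)
  then show ?thesis using h by simp
qed

lemma S1_a: "S1 (a1 + d*q)" unfolding S1_def by simp
lemma S1_b: "S1 (b1 + d*q)" unfolding S1_def by simp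


lemma phi_props: assumes "S2 x" "0 < x"
  shows "S1 (phi x) \<and> a1 \<le> phi x \<and> phi x \<le> x"
proof -
  from S2_form[OF assms] obtain q where "x = a2 + d*q \<or> x = b2 + d*q" by blast
  then show ?thesis
  proof
    assume x: "x = a2 + d*q"
    show ?thesis unfolding x phi_a using S1_a h by auto
  next
    assume x: "x = b2 + d*q"
    show ?thesis unfolding x phi_b using S1_b h by auto
  qed
qed

lemma dd: "a2 + d*p < b2 + d*q \<Longrightarrow> p \<le> q"
proof (rule ccontr)
  assume "a2 + d*p < b2 + d*q" "\<not> p \<le> q"
  then have "d*(q+1) \<le> d*p" by (intro mult_le_mono2) simp
  then show False using \<open>a2 + d*p < b2 + d*q\<close> h by (simp add: algebra_simps)
qed
lemma dd2: "b2 + d*p < a2 + d*q \<Longrightarrow> p < q"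
proof (rule ccontr)
  assume "b2 + d*p < a2 + d*q" "\<not> p < q"
  then have "d*q \<le> d*p" by (intro mult_le_mono2) simp
  then show False using \<open>b2 + d*p < a2 + d*q\<close> h by linarith
qed
lemma dd3: "p < q \<Longrightarrow> b1 + d*p < a1 + d*q"
proof -
  assume "p < q"
  then have "d*(p+1) \<le> d*q" by (intro mult_le_mono2) simp
  then show "b1 + d*p < a1 + d*q" using h by (simp add: algebra_simps)
qed
lemma dd4: "p \<le> q \<Longrightarrow> a1 + d*p < b1 + d*q"
proof -
  assume "p \<le> q"
  then have "d*p \<le> d*q" by (intro mult_le_mono2) simp
  then show "a1 + d*p < b1 + d*q" using h by linarith
qed
lemma dd5: "a2 + d*p < a2 + d*q \<Longrightarrow> a1 + d*p < a1 + d*q" by simp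
lemma dd6: "b2 + d*p < b2 + d*q \<Longrightarrow> b1 + d*p < b1 + d*q" by simp

lemma phi_mono: assumes "S2 x" "0 < x" "S2 y" "0 < y" "x < y"
  shows "phi x < phi y"
proof -
  from S2_form[OF assms(1,2)] obtain p where px: "x = a2 + d*p \<or> x = b2 + d*p" by blast
  from S2_form[OF assms(3,4)] obtain q where qy: "y = a2 + d*q \<or> y = b2 + d*q" by blast
  from px qy assms(5) show ?thesis
  proof (elim disjE)
    assume "x = a2 + d*p" "y = a2 + d*q" "x < y" then show ?thesis by (simp add: phi_a)
  next
    assume "x = a2 + d*p" "y = b2 + d*q" "x < y" then show ?thesis using dd dd4 by (simp add: phi_a phi_b)
  next
    assume "x = b2 + d*p" "y = a2 + d*q" "x < y" then show ?thesis using dd2 dd3 by (simp add: phi_a phi_b)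
  next
    assume "x = b2 + d*p" "y = b2 + d*q" "x < y" then show ?thesis by (simp add: phi_b)
  qed
qed


lemma phi_pos: "S2 x \<Longrightarrow> 0 < x \<Longrightarrow> 0 < phi x" using phi_props h by fastforce

lemma phi_le: assumes "S2 x" "0 < x" "S2 y" "0 < y" "x \<le> y" shows "phi x \<le> phi y"
  using phi_mono[OF assms(1-4)] assms(5) by (cases "x = y") auto

lemma phi_inj: "inj_on phi {x. S2 x \<and> 0 < x}"
proof (rule inj_onI)
  fix x y assume x: "x \<in> {x. S2 x \<and> 0 < x}" and y: "y \<in> {x. S2 x \<and> 0 < x}" and e: "phi x = phi y"
  show "x = y"
  proof (rule ccontr)
    assume "x \<noteq> y"
    then have "x < y \<or> y < x" by auto
    then show False using phi_mono x y e by fastforce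
  qed
qed

definition A :: "(nat \<Rightarrow> bool) \<Rightarrow> nat \<Rightarrow> nat list set" where
  "A S n = {xs. is_partition xs \<and> perimeter xs = int n \<and> (\<forall>x\<in>set xs. S x)}"

lemma ell1: "ell d a1 b1 n = card (A S1 n)" unfolding ell_def A_def S1_def by simp
lemma ell2: "ell d a2 b2 n = card (A S2 n)" unfolding ell_def A_def S2_def by simp

lemma A_nonempty: "xs \<in> A S n \<Longrightarrow> xs \<noteq> []"
  unfolding A_def perimeter_def by auto

lemma A_finite: "finite (A S n)"
proof (rule finite_subset)
  show "A S n \<subseteq> {xs. set xs \<subseteq> {0..n+1} \<and> length xs \<le> n+1}"
  proof
    fix xs assume xs: "xs \<in> A S n"
    then have ne: "xs \<noteq> []" by (rule A_nonempty)
    from xs have p: "int (Max (set xs)) + int (length xs) - 1 = int n"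
      using ne unfolding A_def perimeter_def by simp
    have "length xs \<ge> 1" using ne by (cases xs) auto
    then have "Max (set xs) \<le> n" "length xs \<le> n+1" using p by linarith+
    moreover have "\<forall>x\<in>set xs. x \<le> n+1"
    proof
      fix x assume "x \<in> set xs"
      then have "x \<le> Max (set xs)" by simp
      then show "x \<le> n+1" using \<open>Max (set xs) \<le> n\<close> by linarith
    qed
    ultimately have "\<forall>x\<in>set xs. x \<le> n+1" "length xs \<le> n+1" by blast+
    then show "xs \<in> {xs. set xs \<subseteq> {0..n+1} \<and> length xs \<le> n+1}" by auto
  qed
  show "finite {xs. set xs \<subseteq> {0..n+1} \<and> length xs \<le> n+1}"
    by (rule finite_lists_length_le) simp
qed

definition F :: "nat list \<Rightarrow> nat list" where
  "F xs = map phi xs @ replicate (Max (set xs) - phi (Max (set xs))) a1"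

lemma sorted_rep: "sorted_wrt (\<ge>) (replicate k (c::nat))"
  by (induction k) auto

lemma F_props: assumes xs: "xs \<in> A S2 n"
  shows "F xs \<in> A S1 n \<and> Max (set (F xs)) = phi (Max (set xs))"
proof -
  have ne: "xs \<noteq> []" using xs by (rule A_nonempty)
  have part: "sorted_wrt (\<ge>) xs" "\<forall>x\<in>set xs. 0 < x" "\<forall>x\<in>set xs. S2 x"
    and per: "perimeter xs = int n"
    using xs unfolding A_def is_partition_def by auto
  define M where "M = Max (set xs)"
  have Min: "M \<in> set xs" using ne unfolding M_def by simp
  have Mge: "\<forall>x\<in>set xs. x \<le> M" unfolding M_def by simp
  have MS: "S2 M" "0 < M" using Min part by auto
  have phiM: "a1 \<le> phi M" "phi M \<le> M" "S1 (phi M)" using phi_props[OF MS] by auto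
  have le: "\<forall>x\<in>set xs. phi x \<le> phi M" using phi_le MS part Mge by blast
  have setF: "set (F xs) = phi ` set xs \<union> set (replicate (M - phi M) a1)"
    unfolding F_def M_def by simp
  have maxF: "Max (set (F xs)) = phi M"
  proof (rule Max_eqI)
    show "finite (set (F xs))" by simp
    show "y \<le> phi M" if "y \<in> set (F xs)" for y using that setF le phiM by auto
    show "phi M \<in> set (F xs)" using setF Min by auto
  qed
  have lenF: "length (F xs) = length xs + (M - phi M)" unfolding F_def M_def by simp
  have neF: "F xs \<noteq> []" using ne unfolding F_def by simp
  have perF: "perimeter (F xs) = int n"
    using per ne neF phiM(2) unfolding perimeter_def maxF lenF M_def[symmetric] by auto
  have sortF: "sorted_wrt (\<ge>) (F xs)"
    unfolding F_def sorted_wrt_append sorted_wrt_map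
  proof (intro conjI)
    show "sorted_wrt (\<lambda>x y. phi y \<le> phi x) xs"
      by (rule sorted_wrt_mono_rel[OF _ part(1)]) (use phi_le part in blast)
    show "sorted_wrt (\<ge>) (replicate (Max (set xs) - phi (Max (set xs))) a1)" by (rule sorted_rep)
    show "\<forall>x\<in>set (map phi xs). \<forall>y\<in>set (replicate (Max (set xs) - phi (Max (set xs))) a1). y \<le> x"
      using phi_props part by auto
  qed
  have posF: "\<forall>x\<in>set (F xs). 0 < x" using setF phi_pos part h by auto
  have S1F: "\<forall>x\<in>set (F xs). S1 x" using setF phi_props part S1_a[of 0] by auto
  show ?thesis using sortF posF S1F perF maxF unfolding A_def is_partition_def M_def by auto
qed

lemma F_inj: "inj_on F (A S2 n)"
proof (rule inj_onI)
  fix xs ys assume xs: "xs \<in> A S2 n" and ys: "ys \<in> A S2 n" and e: "F xs = F ys"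
  have nx: "xs \<noteq> []" using xs by (rule A_nonempty)
  have ny: "ys \<noteq> []" using ys by (rule A_nonempty)
  have sx: "\<forall>x\<in>set xs. S2 x \<and> 0 < x" using xs unfolding A_def is_partition_def by auto
  have sy: "\<forall>x\<in>set ys. S2 x \<and> 0 < x" using ys unfolding A_def is_partition_def by auto
  have "phi (Max (set xs)) = phi (Max (set ys))" using F_props[OF xs] F_props[OF ys] e by simp
  moreover have "Max (set xs) \<in> {x. S2 x \<and> 0 < x}" using sx nx by simp
  moreover have "Max (set ys) \<in> {x. S2 x \<and> 0 < x}" using sy ny by simp
  ultimately have mm: "Max (set xs) = Max (set ys)" using phi_inj by (meson inj_onD)
  then have "map phi xs = map phi ys" using e unfolding F_def by simp
  then show "xs = ys"
    by (rule map_inj_on) (rule inj_on_subset[OF phi_inj], use sx sy in auto)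
qed

lemma card_le: "card (A S2 n) \<le> card (A S1 n)"
proof -
  have "card (A S2 n) = card (F ` A S2 n)" using F_inj by (simp add: card_image)
  also have "\<dots> \<le> card (A S1 n)" by (rule card_mono[OF A_finite]) (use F_props in auto)
  finally show ?thesis .
qed


lemma extra: assumes tt: "a1 + d \<le> tt" "S1 tt"
  and cond: "\<And>M. S2 M \<Longrightarrow> 0 < M \<Longrightarrow> phi M = tt \<Longrightarrow> tt < M" and n: "tt \<le> n"
  shows "card (A S2 n) + (n + 1 - tt) \<le> card (A S1 n)"
proof -
  define L where "L = n + 1 - tt"
  define g where "g i = tt # replicate i (a1+d) @ replicate (L-1-i) b1" for i
  have b1top: "b1 < tt" "b1 \<noteq> a1 + d" "a1 < tt" "a1 \<noteq> a1 + d" "a1 \<noteq> b1" using h d2 tt by auto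
  have gA: "g i \<in> A S1 n \<and> Max (set (g i)) = tt \<and> a1 \<notin> set (g i)" if i: "i < L" for i
  proof -
    have setg: "set (g i) \<subseteq> {tt, a1+d, b1}" "tt \<in> set (g i)" unfolding g_def by auto
    have mx: "Max (set (g i)) = tt"
    proof (rule Max_eqI)
      show "finite (set (g i))" by simp
      show "y \<le> tt" if "y \<in> set (g i)" for y using that setg tt b1top by auto
      show "tt \<in> set (g i)" by (rule setg(2))
    qed
    have len: "length (g i) = L" unfolding g_def using i by simp
    have per: "perimeter (g i) = int n" unfolding perimeter_def mx len L_def
      using n by (simp add: g_def)
    have srt: "sorted_wrt (\<ge>) (g i)" unfolding g_def
      using sorted_rep[of i "a1+d"] sorted_rep[of "L-1-i" b1] tt b1top h
      by (auto simp: sorted_wrt_append)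
    have pos: "\<forall>x\<in>set (g i). 0 < x" using setg h tt by auto
    have S: "\<forall>x\<in>set (g i). S1 x" using setg tt(2) S1_a[of 1] S1_b[of 0] by auto
    have "a1 \<notin> set (g i)" using setg b1top by auto
    then show ?thesis using mx per srt pos S unfolding A_def is_partition_def by auto
  qed
  have cnt: "length (filter (\<lambda>x. x = b1) (g i)) = L - 1 - i" for i
    unfolding g_def using b1top by (simp add: filter_replicate)
  have ginj: "inj_on g {..<L}"
  proof (rule inj_onI)
    fix i j assume "i \<in> {..<L}" "j \<in> {..<L}" "g i = g j"
    then show "i = j" using cnt[of i] cnt[of j] by auto
  qed
  have disj: "F ` A S2 n \<inter> g ` {..<L} = {}"
  proof (rule ccontr)
    assume "F ` A S2 n \<inter> g ` {..<L} \<noteq> {}"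
    then obtain xs i where xs: "xs \<in> A S2 n" and i: "i < L" and e: "F xs = g i" by auto
    have ne: "xs \<noteq> []" using xs by (rule A_nonempty)
    have MS: "S2 (Max (set xs))" "0 < Max (set xs)"
      using xs ne unfolding A_def is_partition_def by auto
    have "phi (Max (set xs)) = tt" using F_props[OF xs] gA[OF i] e by simp
    then have "tt < Max (set xs)" using cond MS by blast
    then have "Max (set xs) - phi (Max (set xs)) > 0" using \<open>phi (Max (set xs)) = tt\<close> by simp
    then have "a1 \<in> set (F xs)" unfolding F_def by simp
    then show False using gA[OF i] e by simp
  qed
  have "card (A S2 n) + L = card (F ` A S2 n) + card (g ` {..<L})"
    using F_inj ginj by (simp add: card_image)
  also have "\<dots> = card (F ` A S2 n \<union> g ` {..<L})"
    using disj A_finite by (simp add: card_Un_disjoint)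
  also have "\<dots> \<le> card (A S1 n)"
    by (rule card_mono[OF A_finite]) (use F_props gA in auto)
  finally show ?thesis unfolding L_def .
qed


lemma lim: assumes top: "a1 + d \<le> tt" "S1 tt"
  and cond: "\<And>M. S2 M \<Longrightarrow> 0 < M \<Longrightarrow> phi M = tt \<Longrightarrow> tt < M"
  shows "filterlim (\<lambda>n. int (card (A S1 n)) - int (card (A S2 n))) at_top sequentially"
  unfolding filterlim_at_top eventually_sequentially
proof
  fix Z :: int
  show "\<exists>N. \<forall>n\<ge>N. Z \<le> int (card (A S1 n)) - int (card (A S2 n))"
  proof (intro exI allI impI)
    fix n assume n: "nat Z + tt \<le> n"
    have tn: "tt \<le> n" using n by linarith
    have c: "card (A S2 n) + (n + 1 - tt) \<le> card (A S1 n)" by (rule extra[OF top cond tn])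
    have "int (card (A S2 n)) + (int n + 1 - int tt) \<le> int (card (A S1 n))"
      using c tn by linarith
    moreover have "Z \<le> int n + 1 - int tt" using n by linarith
    ultimately show "Z \<le> int (card (A S1 n)) - int (card (A S2 n))" by linarith
  qed
qed

lemma case1: assumes "a1 < a2"
  shows "filterlim (\<lambda>n. int (card (A S1 n)) - int (card (A S2 n))) at_top sequentially"
proof (rule lim[of "a1 + d"])
  show "a1 + d \<le> a1 + d" by simp
  show "S1 (a1 + d)" using S1_a[of 1] by simp
  fix M assume M: "S2 M" "0 < M" "phi M = a1 + d"
  from S2_form[OF M(1,2)] obtain q where "M = a2 + d*q \<or> M = b2 + d*q" by blast
  then show "a1 + d < M"
  proof
    assume "M = a2 + d*q"
    then have "a1 + d*q = a1 + d" using M(3) phi_a by simp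
    then have "q = 1" using d2 by simp
    then show ?thesis using \<open>M = a2 + d*q\<close> assms by simp
  next
    assume "M = b2 + d*q"
    then have "b1 + d*q = a1 + d" using M(3) phi_b by simp
    then have "(b1 + d*q) mod d = (a1 + d) mod d" by simp
    then have "b1 mod d = a1 mod d" by simp
    then show ?thesis using modne1 by simp
  qed
qed

lemma case2: assumes "a1 = a2" "b1 < b2"
  shows "filterlim (\<lambda>n. int (card (A S1 n)) - int (card (A S2 n))) at_top sequentially"
proof (rule lim[of "b1 + d"])
  show "a1 + d \<le> b1 + d" using h by simp
  show "S1 (b1 + d)" using S1_b[of 1] by simp
  fix M assume M: "S2 M" "0 < M" "phi M = b1 + d"
  from S2_form[OF M(1,2)] obtain q where "M = a2 + d*q \<or> M = b2 + d*q" by blast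
  then show "b1 + d < M"
  proof
    assume "M = b2 + d*q"
    then have "b1 + d*q = b1 + d" using M(3) phi_b by simp
    then have "q = 1" using d2 by simp
    then show ?thesis using \<open>M = b2 + d*q\<close> assms by simp
  next
    assume "M = a2 + d*q"
    then have "a1 + d*q = b1 + d" using M(3) phi_a by simp
    then have "(a1 + d*q) mod d = (b1 + d) mod d" by simp
    then have "b1 mod d = a1 mod d" by simp
    then show ?thesis using modne1 by simp
  qed
qed

end

theorem proposition1p4:
  fixes d a1 a2 b1 b2 :: nat
  assumes "d \<ge> 2"
    and "0 < a1" "a1 < b1" "b1 \<le> d"
    and "0 < a2" "a2 < b2" "b2 \<le> d"
    and "a1 \<le> a2" "b1 \<le> b2" "(a1, b1) \<noteq> (a2, b2)"
  shows "(\<forall>n\<ge>1. ell d a1 b1 n \<ge> ell d a2 b2 n) \<and>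
         filterlim (\<lambda>n. int (ell d a1 b1 n) - int (ell d a2 b2 n)) at_top sequentially"
proof -
  interpret pset d a1 b1 a2 b2 using assms by unfold_locales auto
  have "a1 < a2 \<or> (a1 = a2 \<and> b1 < b2)" using assms by auto
  then have "filterlim (\<lambda>n. int (card (A S1 n)) - int (card (A S2 n))) at_top sequentially"
    using case1 case2 by blast
  then show ?thesis using card_le unfolding ell1 ell2 by simp
qed

end
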